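(* For every integer $k\ge 0$ let $\sigma^{-1}_{2^k}:\{1,\dots,2^k\}\to\{1,\dots,2^k\}$ be defined recursively by $\sigma^{-1}_{2^0}(1)=1$ and, for $k\ge 1$ and $1\le n\le 2^{k-1}$, $$\sigma^{-1}_{2^k}(2n-1)=\sigma^{-1}_{2^{k-1}}(n),\qquad \sigma^{-1}_{2^k}(2n)=2^k+1-\sigma^{-1}_{2^{k-1}}(n).$$ Then for every $k\ge 0$, $\sigma^{-1}_{2^k}$ is a permutation of $\{1,\dots,2^k\}$ and it is the inverse permutation of $\sigma_{2^k}$, i.e. $\sigma^{-1}_{2^k}(\sigma_{2^k}(n))=n$ for all $n\in\{1,\dots,2^k\}$.
   Context: Let $f:I\subset\mathbb{R}\to I$ be a unimodal map depending on a parameter, with a maximum at its critical point $C$, undergoing a period-doubling cascade. For the superstable $2^k$-periodic orbit $\{C,f(C),\dots,f^{2^k-1}(C)\}$ of the cascade, label its points in descending order of the real line as $C^*_{(1,2^k)}>C^*_{(2,2^k)}>\dots>C^*_{(2^k,2^k)}$, and let $\sigma_{2^k}(i)\in\{1,\dots,2^k\}$ be the number of iterations with $f^{\sigma_{2^k}(i)}(C)=C^*_{(i,2^k)}$. The permutation $\sigma_{2^k}=(\sigma_{2^k}(1),\dots,\sigma_{2^k}(2^k))$ of $\{1,\dots,2^k\}$ is (by earlier work) characterized purely combinatorially by $\sigma_{2^0}(1)=1$ and, for $k\ge 0$ and $n=1,\dots,2^k$, $$\sigma_{2^{k+1}}(n)=2\sigma_{2^k}(n)-1,\qquad \sigma_{2^{k+1}}(2^k+n)=2\sigma_{2^k}(2^k-n+1).$$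 This recurrence may be taken as the definition of $\sigma_{2^k}$. *)

theory Defs
  imports Main "HOL-Library.FuncSet"
begin

text \<open>sigma k n is sigma_{2^k}(n) for n in {1..2^k}; value 0 outside that range (irrelevant).\<close>
fun sigma :: "nat \<Rightarrow> nat \<Rightarrow> nat" where
  "sigma 0 n = (if n = 1 then 1 else 0)"
| "sigma (Suc k) n =
     (if 1 \<le> n \<and> n \<le> 2^k then 2 * sigma k n - 1
      else if 2^k < n \<and> n \<le> 2^(Suc k) then 2 * sigma k (2^(Suc k) - n + 1)
      else 0)"

text \<open>sigma_inv k m is the recursively defined sigma^{-1}_{2^k}(m) for m in {1..2^k};
  odd m = 2n-1 gives n = (m+1) div 2, even m = 2n gives n = m div 2.\<close>
fun sigma_inv :: "nat \<Rightarrow> nat \<Rightarrow> nat" where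
  "sigma_inv 0 m = (if m = 1 then 1 else 0)"
| "sigma_inv (Suc k) m =
     (if 1 \<le> m \<and> m \<le> 2^(Suc k) then
        (if odd m then sigma_inv k ((m + 1) div 2)
         else 2^(Suc k) + 1 - sigma_inv k (m div 2))
      else 0)"

end

theory Submission
  imports Defs
begin

lemma key: "\<forall>n \<in> {1..2^k}. sigma k n \<in> {1..2^k} \<and> sigma_inv k (sigma k n) = n"
proof (induction k)
  case 0 then show ?case by simp
next
  case (Suc k)
  show ?case
  proof
    fix n assume n: "n \<in> {1..(2::nat)^Suc k}"
    show "sigma (Suc k) n \<in> {1..2^Suc k} \<and> sigma_inv (Suc k) (sigma (Suc k) n) = n"
    proof (cases "n \<le> 2^k")
      case True
      with n Suc.IH obtain s where s: "s = sigma k n" "s \<in> {1..2^k}" "sigma_inv k s = n" by auto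
      have e: "sigma (Suc k) n = 2*s - 1" using True n s by auto
      have o: "odd (2*s - 1)" using s by auto
      have d: "(2*s - 1 + 1) div 2 = s" using s by auto
      show ?thesis using e o d s by auto
    next
      case False
      define m where "m = 2^Suc k - n + 1"
      have m: "m \<in> {1..2^k}" using False n unfolding m_def by auto
      with Suc.IH obtain s where s: "s = sigma k m" "s \<in> {1..2^k}" "sigma_inv k s = m" by auto
      have e: "sigma (Suc k) n = 2*s" using False n s m_def by auto
      have "sigma_inv (Suc k) (2*s) = 2^Suc k + 1 - m" using s by auto
      also have "\<dots> = n" using n False unfolding m_def by auto
      finally show ?thesis using e s by auto
    qed
  qed
qed

theorem proposition1:
  fixes k :: nat
  shows "bij_betw (sigma_inv k) {1..2^k} {1..2^k}
         \<and> (\<forall>n \<in> {1..2^k}. sigma_inv k (sigma k n) = n)"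
proof -
  let ?S = "{1..(2::nat)^k}"
  have K: "\<forall>n \<in> ?S. sigma k n \<in> ?S \<and> sigma_inv k (sigma k n) = n" by (rule key)
  have inj: "inj_on (sigma k) ?S" by (metis K inj_onI)
  have sub: "sigma k ` ?S \<subseteq> ?S" using K by auto
  have img: "sigma k ` ?S = ?S"
    using inj sub by (simp add: card_image card_subset_eq)
  have img2: "sigma_inv k ` ?S = ?S"
  proof -
    have "sigma_inv k ` ?S = sigma_inv k ` sigma k ` ?S" using img by simp
    also have "\<dots> = ?S" using K by (force simp: image_image)
    finally show ?thesis .
  qed
  have "inj_on (sigma_inv k) ?S"
    using img2 by (simp add: eq_card_imp_inj_on)
  with img2 have "bij_betw (sigma_inv k) ?S ?S" by (simp add: bij_betw_def)
  with K show ?thesis by blast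
qed

end
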